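(* Let $\alpha_1,\beta_1,\alpha_2,\beta_2\in(0,1)$ with $\lambda_i:=1-\alpha_i-\beta_i\le 0$ for $i=1,2$. Let $w_1,w_2\ge 0$, $\Gamma_1,\Gamma_2\in(0,1]$, and MPR success probabilities $p_{1/1},p_{2/2},p_{1/1,2},p_{2/2,1}\in[0,1]$. For policies $\mathbf a_k=(a_{k,0},a_{k,1},a_{k,2})$, $k=1,2$, define $$E(\mathbf a_1,\mathbf a_2)=w_1E_1\big(q_1(\mathbf a_1,\mathbf a_2)\big)+w_2E_2\big(q_2(\mathbf a_1,\mathbf a_2)\big).$$ Then the minimum of $E$ over $\mathcal F_\Gamma=\mathcal P_1(\Gamma_1)\times\mathcal P_2(\Gamma_2)$ exists and at least one global minimizer is a pair of vertices, i.e. $$\min_{(\mathbf a_1,\mathbf a_2)\in\mathcal F_\Gamma}E(\mathbf a_1,\mathbf a_2)=\min_{\mathbf v_1\in\mathcal V_1,\ \mathbf v_2\in\mathcal V_2}E(\mathbf v_1,\mathbf v_2),$$ where $\mathcal V_k=\{(1,0,0),\,(1-\Gamma_k,\Gamma_k,0),\,(1-\Gamma_k,0,\Gamma_k)\}$. In particular, a global optimum is found among nine candidate policy pairs.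
   Context: For $i\in\{1,2\}$ and $q\in[0,1]$, the (steady-state reconstruction error) function is $$E_i(q)=\frac{2\alpha_i\beta_i(1-q)}{(\alpha_i+\beta_i)\big[(\alpha_i+\beta_i)-q(\alpha_i+\beta_i-1)\big]}=\frac{2\alpha_i\beta_i(1-q)}{(1-\lambda_i)(1-\lambda_i(1-q))}.$$ The effective update probabilities are, for $i\in\{1,2\}$ and $j$ the other index ($j=1+(i\bmod 2)$), $$q_i(\mathbf a_1,\mathbf a_2)=a_{1,i}a_{2,0}\,p_{1/1}+a_{1,0}a_{2,i}\,p_{2/2}+a_{1,i}a_{2,i}\big[1-(1-p_{1/1,2})(1-p_{2/2,1})\big]+a_{1,i}a_{2,j}\,p_{1/1,2}+a_{1,j}a_{2,i}\,p_{2/2,1}.$$ The feasible policy set of sensor $k$ is $\mathcal P_k(\Gamma_k)=\{\mathbf a_k\in\mathbb R_{\ge0}^3:\ a_{k,0}+a_{k,1}+a_{k,2}=1,\ a_{k,1}+a_{k,2}\le\Gamma_k\}$ (here $a_{k,0}$ is the probability of staying silent and $a_{k,i}$ the probability of sampling and transmitting source $i$ in a slot). *)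

theory Defs
  imports "HOL-Analysis.Analysis"
begin

text \<open>Steady-state reconstruction error of source i with parameters alpha, beta
  and effective update probability q.\<close>
definition Err :: "real \<Rightarrow> real \<Rightarrow> real \<Rightarrow> real" where
  "Err \<alpha> \<beta> q = 2 * \<alpha> * \<beta> * (1 - q) /
      ((\<alpha> + \<beta>) * ((\<alpha> + \<beta>) - q * (\<alpha> + \<beta> - 1)))"

text \<open>A policy is a triple (a0, a1, a2): silent, sample source 1, sample source 2.\<close>
type_synonym policy = "real \<times> real \<times> real"

definition pol0 :: "policy \<Rightarrow> real" where "pol0 a = fst a"
definition pol1 :: "policy \<Rightarrow> real" where "pol1 a = fst (snd a)"
definition pol2 :: "policy \<Rightarrow> real" where "pol2 a = snd (snd a)"

definition polc :: "policy \<Rightarrow> nat \<Rightarrow> real" where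
  "polc a i = (if i = 1 then pol1 a else pol2 a)"

text \<open>Effective update probability of source i (i = 1 or 2; j is the other index).
  Parameters: p11 = p_{1/1}, p22 = p_{2/2}, p112 = p_{1/1,2}, p221 = p_{2/2,1}.\<close>
definition qeff :: "real \<Rightarrow> real \<Rightarrow> real \<Rightarrow> real \<Rightarrow> nat \<Rightarrow> policy \<Rightarrow> policy \<Rightarrow> real" where
  "qeff p11 p22 p112 p221 i a1 a2 =
     (let j = 1 + (i mod 2) in
       polc a1 i * pol0 a2 * p11 + pol0 a1 * polc a2 i * p22
       + polc a1 i * polc a2 i * (1 - (1 - p112) * (1 - p221))
       + polc a1 i * polc a2 j * p112 + polc a1 j * polc a2 i * p221)"

definition feasible :: "real \<Rightarrow> policy set" where
  "feasible \<Gamma> = {a. pol0 a \<ge> 0 \<and> pol1 a \<ge> 0 \<and> pol2 a \<ge> 0 \<and>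
                     pol0 a + pol1 a + pol2 a = 1 \<and> pol1 a + pol2 a \<le> \<Gamma>}"

definition vertices :: "real \<Rightarrow> policy set" where
  "vertices \<Gamma> = {(1, 0, 0), (1 - \<Gamma>, \<Gamma>, 0), (1 - \<Gamma>, 0, \<Gamma>)}"

definition totalE ::
  "real \<Rightarrow> real \<Rightarrow> real \<Rightarrow> real \<Rightarrow> real \<Rightarrow> real \<Rightarrow> real \<Rightarrow> real \<Rightarrow> real \<Rightarrow> real
   \<Rightarrow> policy \<Rightarrow> policy \<Rightarrow> real" where
  "totalE \<alpha>1 \<beta>1 \<alpha>2 \<beta>2 w1 w2 p11 p22 p112 p221 a1 a2 =
     w1 * Err \<alpha>1 \<beta>1 (qeff p11 p22 p112 p221 1 a1 a2)
   + w2 * Err \<alpha>2 \<beta>2 (qeff p11 p22 p112 p221 2 a1 a2)"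

end

theory Submission imports Defs begin

lemma err_tangent:
  fixes a b x y :: real
  assumes "0 < a" "0 < b" "1 \<le> a + b" "x \<le> 1" "y \<le> 1"
  shows "Err a b x \<le> Err a b y - 2*a*b/((a+b)*((a+b) - y*(a+b-1))^2) * (x - y)"
proof -
  define s where "s = a + b"
  have s1: "1 \<le> s" using assms s_def by simp
  have "(1-x)*(s-1) \<ge> 0" using s1 assms(4) by simp
  then have D: "(s - x*(s-1)) \<ge> 1" by (simp add: algebra_simps)
  have "(1-y)*(s-1) \<ge> 0" using s1 assms(5) by simp
  then have F: "(s - y*(s-1)) \<ge> 1" by (simp add: algebra_simps)
  define Dx where "Dx = s - x*(s-1)"
  define Fy where "Fy = s - y*(s-1)"
  have D0: "Dx > 0" "Fy > 0" "s > 0" using D F s1 Dx_def Fy_def by auto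
  have eq0: "2*a*b*(1-y)/(s*Fy) - 2*a*b/(s*Fy^2) * (x - y) - 2*a*b*(1-x)/(s*Dx)
      = 2*a*b*(s-1)*(x-y)^2/(s*Dx*Fy^2)"
    using D0 apply (simp add: field_simps power2_eq_square)
    unfolding Dx_def Fy_def by algebra
  have eq: "Err a b y - 2*a*b/(s*(s - y*(s-1))^2) * (x - y) - Err a b x
      = 2*a*b*(s-1)*(x-y)^2/(s*Dx*Fy^2)"
    unfolding Err_def s_def[symmetric] using eq0 Dx_def Fy_def by simp
  have "2*a*b*(s-1)*(x-y)^2/(s*Dx*Fy^2) \<ge> 0"
    using assms s1 D0 by (intro divide_nonneg_pos) auto
  then show ?thesis using eq s_def by simp
qed


lemma err_jensen3:
  fixes a b t0 t1 t2 q0 q1 q2 :: real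
  assumes "0 < a" "0 < b" "1 \<le> a + b" "q0 \<le> 1" "q1 \<le> 1" "q2 \<le> 1"
    and "0 \<le> t0" "0 \<le> t1" "0 \<le> t2" "t0 + t1 + t2 = 1"
  shows "t0 * Err a b q0 + t1 * Err a b q1 + t2 * Err a b q2
         \<le> Err a b (t0*q0 + t1*q1 + t2*q2)"
proof -
  define y where "y = t0*q0 + t1*q1 + t2*q2"
  have "t0*q0 \<le> t0" "t1*q1 \<le> t1" "t2*q2 \<le> t2"
    using assms by (auto intro: mult_left_le)
  then have y1: "y \<le> 1" using assms y_def by linarith
  define d where "d = 2*a*b/((a+b)*((a+b) - y*(a+b-1))^2)"
  have h: "Err a b q \<le> Err a b y - d * (q - y)" if "q \<le> 1" for q
    using err_tangent[OF assms(1-3) that y1] d_def by simp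
  have "t0 * Err a b q0 \<le> t0 * (Err a b y - d * (q0 - y))"
    using h[OF assms(4)] assms(7) by (rule mult_left_mono)
  moreover have "t1 * Err a b q1 \<le> t1 * (Err a b y - d * (q1 - y))"
    using h[OF assms(5)] assms(8) by (rule mult_left_mono)
  moreover have "t2 * Err a b q2 \<le> t2 * (Err a b y - d * (q2 - y))"
    using h[OF assms(6)] assms(9) by (rule mult_left_mono)
  moreover have "t0 * (Err a b y - d * (q0 - y)) + t1 * (Err a b y - d * (q1 - y))
     + t2 * (Err a b y - d * (q2 - y)) = Err a b y"
  proof -
    have "t0 * (Err a b y - d * (q0 - y)) + t1 * (Err a b y - d * (q1 - y))
     + t2 * (Err a b y - d * (q2 - y)) = (t0+t1+t2) * Err a b y - d * (y - (t0+t1+t2)*y)"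
      unfolding y_def by (simp add: algebra_simps)
    then show ?thesis using assms(10) by simp
  qed
  ultimately show ?thesis unfolding y_def by linarith
qed

lemma min3_le:
  fixes t0 t1 t2 e0 e1 e2 E :: real
  assumes "0 \<le> t0" "0 \<le> t1" "0 \<le> t2" "t0 + t1 + t2 = 1"
    and "t0*e0 + t1*e1 + t2*e2 \<le> E"
  shows "e0 \<le> E \<or> e1 \<le> E \<or> e2 \<le> E"
proof -
  define m where "m = min e0 (min e1 e2)"
  have "t0*m \<le> t0*e0" "t1*m \<le> t1*e1" "t2*m \<le> t2*e2"
    using assms m_def by (auto intro: mult_left_mono)
  moreover have "t0*m + t1*m + t2*m = m" using assms(4)
    by (metis distrib_right mult_1)
  ultimately have "m \<le> E" using assms(5) by linarith
  then show ?thesis unfolding m_def by linarith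
qed

lemma qeff_le1:
  fixes p11 p22 p112 p221 :: real and x0 x1 x2 y0 y1 y2 :: real
  assumes "0 \<le> p11" "p11 \<le> 1" "0 \<le> p22" "p22 \<le> 1"
      and "0 \<le> p112" "p112 \<le> 1" "0 \<le> p221" "p221 \<le> 1"
      and "0 \<le> x0" "0 \<le> x1" "0 \<le> x2" "x0 + x1 + x2 = 1"
      and "0 \<le> y0" "0 \<le> y1" "0 \<le> y2" "y0 + y1 + y2 = 1"
      and "i = 1 \<or> i = 2"
  shows "qeff p11 p22 p112 p221 i (x0,x1,x2) (y0,y1,y2) \<le> 1"
proof -
  define r where "r = 1 - (1 - p112) * (1 - p221)"
  have "(1 - p112) * (1 - p221) \<ge> 0" using assms by simp
  then have r1: "r \<le> 1" using r_def by simp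
  have prod: "(x0+x1+x2)*(y0+y1+y2) = 1" using assms by simp
  have nn: "0 \<le> x*y" if "0 \<le> x" "0 \<le> y" for x y :: real using that by simp
  have le: "x*y*c \<le> x*y" if "0 \<le> x" "0 \<le> y" "c \<le> 1" for x y c :: real
    using that by (intro mult_left_le) auto
  from assms(17) show ?thesis
  proof
    assume "i = 1"
    then have "qeff p11 p22 p112 p221 i (x0,x1,x2) (y0,y1,y2)
       = x1*y0*p11 + x0*y1*p22 + x1*y1*r + x1*y2*p112 + x2*y1*p221"
      unfolding qeff_def polc_def pol0_def pol1_def pol2_def r_def by simp
    moreover have "x1*y0*p11 \<le> x1*y0" "x0*y1*p22 \<le> x0*y1" "x1*y1*r \<le> x1*y1"
      "x1*y2*p112 \<le> x1*y2" "x2*y1*p221 \<le> x2*y1"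
      using assms r1 by (auto intro!: le)
    moreover have "0 \<le> x0*y0" "0 \<le> x0*y2" "0 \<le> x2*y0" "0 \<le> x2*y2"
      using assms by auto
    moreover have "(x0+x1+x2)*(y0+y1+y2) = x0*y0+x0*y1+x0*y2+x1*y0+x1*y1+x1*y2+x2*y0+x2*y1+x2*y2"
      by (simp add: algebra_simps)
    ultimately show ?thesis using prod by linarith
  next
    assume "i = 2"
    then have "qeff p11 p22 p112 p221 i (x0,x1,x2) (y0,y1,y2)
       = x2*y0*p11 + x0*y2*p22 + x2*y2*r + x2*y1*p112 + x1*y2*p221"
      unfolding qeff_def polc_def pol0_def pol1_def pol2_def r_def by simp
    moreover have "x2*y0*p11 \<le> x2*y0" "x0*y2*p22 \<le> x0*y2" "x2*y2*r \<le> x2*y2"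
      "x2*y1*p112 \<le> x2*y1" "x1*y2*p221 \<le> x1*y2"
      using assms r1 by (auto intro!: le)
    moreover have "0 \<le> x0*y0" "0 \<le> x0*y1" "0 \<le> x1*y0" "0 \<le> x1*y1"
      using assms by auto
    moreover have "(x0+x1+x2)*(y0+y1+y2) = x0*y0+x0*y1+x0*y2+x1*y0+x1*y1+x1*y2+x2*y0+x2*y1+x2*y2"
      by (simp add: algebra_simps)
    ultimately show ?thesis using prod by linarith
  qed
qed

lemma qeff_le1':
  assumes "0 \<le> p11" "p11 \<le> 1" "0 \<le> p22" "p22 \<le> 1"
      and "0 \<le> p112" "p112 \<le> 1" "0 \<le> p221" "p221 \<le> 1"
      and "a1 \<in> feasible G1" "a2 \<in> feasible G2" "i = 1 \<or> i = 2"
  shows "qeff p11 p22 p112 p221 i a1 a2 \<le> 1"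
proof -
  obtain x0 x1 x2 where a1: "a1 = (x0,x1,x2)" by (cases a1) auto
  obtain y0 y1 y2 where a2: "a2 = (y0,y1,y2)" by (cases a2) auto
  show ?thesis using assms unfolding a1 a2 feasible_def pol0_def pol1_def pol2_def
    by (intro qeff_le1) auto
qed

lemma vert_feasible:
  assumes "0 < G" "G \<le> 1" "v \<in> vertices G"
  shows "v \<in> feasible G"
  using assms unfolding vertices_def feasible_def pol0_def pol1_def pol2_def by auto

lemma lin1:
  fixes G x1 x2 :: real
  assumes "G \<noteq> 0" "i = 1 \<or> i = 2"
  shows "qeff p11 p22 p112 p221 i (1 - x1 - x2, x1, x2) a2 =
     (1 - x1/G - x2/G) * qeff p11 p22 p112 p221 i (1,0,0) a2
   + (x1/G) * qeff p11 p22 p112 p221 i (1-G,G,0) a2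
   + (x2/G) * qeff p11 p22 p112 p221 i (1-G,0,G) a2"
  using assms(2)
proof
  assume "i = 1" then show ?thesis
    unfolding qeff_def polc_def pol0_def pol1_def pol2_def Let_def using assms(1)
    by (simp add: field_simps)
next
  assume "i = 2" then show ?thesis
    unfolding qeff_def polc_def pol0_def pol1_def pol2_def Let_def using assms(1)
    by (simp add: field_simps)
qed

lemma lin2:
  fixes G x1 x2 :: real
  assumes "G \<noteq> 0" "i = 1 \<or> i = 2"
  shows "qeff p11 p22 p112 p221 i a1 (1 - x1 - x2, x1, x2) =
     (1 - x1/G - x2/G) * qeff p11 p22 p112 p221 i a1 (1,0,0)
   + (x1/G) * qeff p11 p22 p112 p221 i a1 (1-G,G,0)
   + (x2/G) * qeff p11 p22 p112 p221 i a1 (1-G,0,G)"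
  using assms(2)
proof
  assume "i = 1" then show ?thesis
    unfolding qeff_def polc_def pol0_def pol1_def pol2_def Let_def using assms(1)
    by (simp add: field_simps)
next
  assume "i = 2" then show ?thesis
    unfolding qeff_def polc_def pol0_def pol1_def pol2_def Let_def using assms(1)
    by (simp add: field_simps)
qed


lemma reduce:
  fixes \<alpha>1 \<beta>1 \<alpha>2 \<beta>2 w1 w2 G p11 p22 p112 p221 :: real
  assumes "0 < \<alpha>1" "0 < \<beta>1" "1 \<le> \<alpha>1 + \<beta>1"
      and "0 < \<alpha>2" "0 < \<beta>2" "1 \<le> \<alpha>2 + \<beta>2"
      and "0 \<le> w1" "0 \<le> w2" "0 < G" "G \<le> 1"
      and "x \<in> feasible G"
      and lin: "\<And>i x1 x2. i = 1 \<or> i = 2 \<Longrightarrow> Q i (1 - x1 - x2, x1, x2) =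
         (1 - x1/G - x2/G) * Q i (1,0,0) + (x1/G) * Q i (1-G,G,0) + (x2/G) * Q i (1-G,0,G)"
      and le1: "\<And>i v. i = 1 \<or> i = 2 \<Longrightarrow> v \<in> feasible G \<Longrightarrow> Q i v \<le> 1"
  shows "\<exists>v\<in>vertices G. w1 * Err \<alpha>1 \<beta>1 (Q 1 v) + w2 * Err \<alpha>2 \<beta>2 (Q 2 v)
           \<le> w1 * Err \<alpha>1 \<beta>1 (Q 1 x) + w2 * Err \<alpha>2 \<beta>2 (Q 2 x)"
proof -
  obtain x0 x1 x2 where xe: "x = (x0,x1,x2)" by (cases x) auto
  have f: "0 \<le> x0" "0 \<le> x1" "0 \<le> x2" "x0 + x1 + x2 = 1" "x1 + x2 \<le> G"
    using assms(11) unfolding xe feasible_def pol0_def pol1_def pol2_def by auto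
  have xe2: "x = (1 - x1 - x2, x1, x2)" using xe f by simp
  define t1 where "t1 = x1/G"
  define t2 where "t2 = x2/G"
  define t0 where "t0 = 1 - t1 - t2"
  have "t1 + t2 \<le> 1" using f assms(9) unfolding t1_def t2_def
    by (simp add: add_divide_distrib[symmetric])
  then have t: "0 \<le> t0" "0 \<le> t1" "0 \<le> t2" "t0 + t1 + t2 = 1"
    using f assms(9) unfolding t0_def t1_def t2_def by auto
  define v0 where "v0 = ((1::real),(0::real),(0::real))"
  define v1 where "v1 = (1-G,G,(0::real))"
  define v2 where "v2 = (1-G,(0::real),G)"
  have vv: "v0 \<in> vertices G" "v1 \<in> vertices G" "v2 \<in> vertices G"
    unfolding v0_def v1_def v2_def vertices_def by auto
  have vf: "v0 \<in> feasible G" "v1 \<in> feasible G" "v2 \<in> feasible G"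
    using vv vert_feasible assms(9,10) by auto
  let ?E = "\<lambda>v. w1 * Err \<alpha>1 \<beta>1 (Q 1 v) + w2 * Err \<alpha>2 \<beta>2 (Q 2 v)"
  have qx: "Q i x = t0 * Q i v0 + t1 * Q i v1 + t2 * Q i v2" if "i = 1 \<or> i = 2" for i
    unfolding xe2 using lin[OF that, of x1 x2] t0_def t1_def t2_def v0_def v1_def v2_def
    by simp
  have j1: "t0 * Err \<alpha>1 \<beta>1 (Q 1 v0) + t1 * Err \<alpha>1 \<beta>1 (Q 1 v1) + t2 * Err \<alpha>1 \<beta>1 (Q 1 v2)
     \<le> Err \<alpha>1 \<beta>1 (Q 1 x)"
    unfolding qx[of 1, simplified]
    using assms(1-3) le1[of 1] vf t by (intro err_jensen3) auto
  have j2: "t0 * Err \<alpha>2 \<beta>2 (Q 2 v0) + t1 * Err \<alpha>2 \<beta>2 (Q 2 v1) + t2 * Err \<alpha>2 \<beta>2 (Q 2 v2)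
     \<le> Err \<alpha>2 \<beta>2 (Q 2 x)"
    unfolding qx[of 2, simplified]
    using assms(4-6) le1[of 2] vf t by (intro err_jensen3) auto
  have "w1 * (t0 * Err \<alpha>1 \<beta>1 (Q 1 v0) + t1 * Err \<alpha>1 \<beta>1 (Q 1 v1) + t2 * Err \<alpha>1 \<beta>1 (Q 1 v2))
     \<le> w1 * Err \<alpha>1 \<beta>1 (Q 1 x)" using j1 assms(7) by (rule mult_left_mono)
  moreover have "w2 * (t0 * Err \<alpha>2 \<beta>2 (Q 2 v0) + t1 * Err \<alpha>2 \<beta>2 (Q 2 v1) + t2 * Err \<alpha>2 \<beta>2 (Q 2 v2))
     \<le> w2 * Err \<alpha>2 \<beta>2 (Q 2 x)" using j2 assms(8) by (rule mult_left_mono)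
  ultimately have "t0 * ?E v0 + t1 * ?E v1 + t2 * ?E v2 \<le> ?E x"
    by (simp add: algebra_simps)
  then have "?E v0 \<le> ?E x \<or> ?E v1 \<le> ?E x \<or> ?E v2 \<le> ?E x"
    using t by (intro min3_le) auto
  then show ?thesis using vv by blast
qed

theorem theorem1:
  fixes \<alpha>1 \<beta>1 \<alpha>2 \<beta>2 w1 w2 \<Gamma>1 \<Gamma>2 p11 p22 p112 p221 :: real
  assumes "0 < \<alpha>1" "\<alpha>1 < 1" "0 < \<beta>1" "\<beta>1 < 1"
      and "0 < \<alpha>2" "\<alpha>2 < 1" "0 < \<beta>2" "\<beta>2 < 1"
      and "1 - \<alpha>1 - \<beta>1 \<le> 0" "1 - \<alpha>2 - \<beta>2 \<le> 0"
      and "0 \<le> w1" "0 \<le> w2"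
      and "0 < \<Gamma>1" "\<Gamma>1 \<le> 1" "0 < \<Gamma>2" "\<Gamma>2 \<le> 1"
      and "0 \<le> p11" "p11 \<le> 1" "0 \<le> p22" "p22 \<le> 1"
      and "0 \<le> p112" "p112 \<le> 1" "0 \<le> p221" "p221 \<le> 1"
  shows "\<exists>v1\<in>vertices \<Gamma>1. \<exists>v2\<in>vertices \<Gamma>2.
           (v1, v2) \<in> feasible \<Gamma>1 \<times> feasible \<Gamma>2 \<and>
           (\<forall>(a1, a2) \<in> feasible \<Gamma>1 \<times> feasible \<Gamma>2.
              totalE \<alpha>1 \<beta>1 \<alpha>2 \<beta>2 w1 w2 p11 p22 p112 p221 v1 v2
              \<le> totalE \<alpha>1 \<beta>1 \<alpha>2 \<beta>2 w1 w2 p11 p22 p112 p221 a1 a2)"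
proof -
  let ?T = "totalE \<alpha>1 \<beta>1 \<alpha>2 \<beta>2 w1 w2 p11 p22 p112 p221"
  let ?q = "qeff p11 p22 p112 p221"
  have ab: "1 \<le> \<alpha>1 + \<beta>1" "1 \<le> \<alpha>2 + \<beta>2" using assms(9,10) by auto
  have red1: "\<exists>v\<in>vertices \<Gamma>1. ?T v a2 \<le> ?T a1 a2"
    if "a1 \<in> feasible \<Gamma>1" "a2 \<in> feasible \<Gamma>2" for a1 a2
    unfolding totalE_def
    apply (rule reduce[where Q = "\<lambda>i v. ?q i v a2"])
    using assms ab that apply (simp_all only:)
    using assms apply (intro lin1; simp)
    using assms that by (auto intro: qeff_le1')
  have red2: "\<exists>v\<in>vertices \<Gamma>2. ?T a1 v \<le> ?T a1 a2"
    if "a1 \<in> feasible \<Gamma>1" "a2 \<in> feasible \<Gamma>2" for a1 a2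
    unfolding totalE_def
    apply (rule reduce[where Q = "\<lambda>i v. ?q i a1 v"])
    using assms ab that apply (simp_all only:)
    using assms apply (intro lin2; simp)
    using assms that by (auto intro: qeff_le1')
  define S where "S = vertices \<Gamma>1 \<times> vertices \<Gamma>2"
  have fS: "finite S" "S \<noteq> {}" unfolding S_def vertices_def by auto
  define m where "m = arg_min_on (\<lambda>(a,b). ?T a b) S"
  have mS: "m \<in> S" and mmin: "\<not>(\<exists>x\<in>S. (\<lambda>(a,b). ?T a b) x < (\<lambda>(a,b). ?T a b) m)"
    using arg_min_if_finite[OF fS, of "\<lambda>(a,b). ?T a b"] unfolding m_def[symmetric] by auto
  obtain v1 v2 where m: "m = (v1, v2)" by (cases m) auto
  have v: "v1 \<in> vertices \<Gamma>1" "v2 \<in> vertices \<Gamma>2" using mS m S_def by auto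
  have vf: "v1 \<in> feasible \<Gamma>1" "v2 \<in> feasible \<Gamma>2"
    using v vert_feasible assms(13-16) by auto
  have "?T v1 v2 \<le> ?T a1 a2" if af: "a1 \<in> feasible \<Gamma>1" "a2 \<in> feasible \<Gamma>2" for a1 a2
  proof -
    obtain u1 where u1: "u1 \<in> vertices \<Gamma>1" "?T u1 a2 \<le> ?T a1 a2" using red1[OF af] by blast
    have u1f: "u1 \<in> feasible \<Gamma>1" using u1 vert_feasible assms(13,14) by auto
    obtain u2 where u2: "u2 \<in> vertices \<Gamma>2" "?T u1 u2 \<le> ?T u1 a2" using red2[OF u1f af(2)] by blast
    have "(u1,u2) \<in> S" using u1 u2 S_def by auto
    then have "?T v1 v2 \<le> ?T u1 u2" using mmin m by force
    then show ?thesis using u1 u2 by linarith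
  qed
  then show ?thesis using v vf by blast
qed

end
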